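(* Let $k\ge\ell\ge1$ be integers with $k+\ell\ge6$ and let $G$ be a finite digraph. For every pair of non-adjacent vertices $x\in X$, $y\in Y$, $$s(x,y)\le\frac{m-1}{(m+1)\binom{m}{k}}(\alpha+\beta)(1-D)^{m-2}.$$
   Context: Put $m=k+\ell$. Digraphs are finite, without loops; $xy$ denotes an arc from $x$ to $y$; two vertices are adjacent if at least one of $xy,yx$ is an arc. The oriented star $S_{k,\ell}$ has a center $c$, a set $O$ of $k$ out-leaves and a set $I$ of $\ell$ in-leaves; its arcs are exactly $co$ ($o\in O$) and $ic$ ($i\in I$). For a digraph $G$ on $n$ vertices, let $\phi$ be a uniformly random map from $V(S_{k,\ell})$ to $V(G)$ (all $n^{m+1}$ maps equally likely), and let $\mathcal S$ be the set of maps $\phi$ that are isomorphisms from $S_{k,\ell}$ onto $G[\mathrm{Im}\,\phi]$ (in particular injective); $s(x,y)=\Pr[\phi\in\mathcal S\mid \{x,y\}\subseteq\mathrm{Im}\,\phi]$. For $A\subseteq V(G)$, $\rho_A(v)$ is the number of vertices of $A$ adjacent to $v$ divided by $n$, and $\rho(v)=\rho_{V(G)}(v)$. $X=\{v:\rho(v)\ge1/2\}$, $Y=V(G)\setminus X$, $\alpha=|X|/n$, $D=\min_{x\in X}\rho(x)$, $\beta=\max_{y\in Y}\rho_Y(y)$. *)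

theory Defs
  imports Complex_Main "HOL-Library.FuncSet"
begin

definition digraph :: "'a set \<Rightarrow> ('a \<times> 'a) set \<Rightarrow> bool" where
  "digraph V E \<longleftrightarrow> finite V \<and> E \<subseteq> V \<times> V \<and> (\<forall>v. (v, v) \<notin> E)"

definition adj :: "('a \<times> 'a) set \<Rightarrow> 'a \<Rightarrow> 'a \<Rightarrow> bool" where
  "adj E u v \<longleftrightarrow> (u, v) \<in> E \<or> (v, u) \<in> E"

text \<open>The oriented star S_{k,l} on vertex set {0..k+l}: centre 0,
  out-leaves 1..k, in-leaves k+1..k+l.\<close>

definition star_arc :: "nat \<Rightarrow> nat \<Rightarrow> nat \<Rightarrow> nat \<Rightarrow> bool" where
  "star_arc k l i j \<longleftrightarrow>
     (i = 0 \<and> 1 \<le> j \<and> j \<le> k) \<or> (j = 0 \<and> k + 1 \<le> i \<and> i \<le> k + l)"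

definition star_maps :: "'a set \<Rightarrow> nat \<Rightarrow> nat \<Rightarrow> (nat \<Rightarrow> 'a) set" where
  "star_maps V k l = {0..k+l} \<rightarrow>\<^sub>E V"

definition star_isos :: "'a set \<Rightarrow> ('a \<times> 'a) set \<Rightarrow> nat \<Rightarrow> nat \<Rightarrow> (nat \<Rightarrow> 'a) set" where
  "star_isos V E k l = {\<phi> \<in> star_maps V k l. inj_on \<phi> {0..k+l} \<and>
      (\<forall>i\<in>{0..k+l}. \<forall>j\<in>{0..k+l}. ((\<phi> i, \<phi> j) \<in> E \<longleftrightarrow> star_arc k l i j))}"

text \<open>s(x,y) = Pr[phi \<in> S | {x,y} \<subseteq> Im phi] for uniform phi.\<close>
definition s_prob :: "'a set \<Rightarrow> ('a \<times> 'a) set \<Rightarrow> nat \<Rightarrow> nat \<Rightarrow> 'a \<Rightarrow> 'a \<Rightarrow> real" where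
  "s_prob V E k l x y =
     real (card {\<phi> \<in> star_isos V E k l. x \<in> \<phi> ` {0..k+l} \<and> y \<in> \<phi> ` {0..k+l}})
     / real (card {\<phi> \<in> star_maps V k l. x \<in> \<phi> ` {0..k+l} \<and> y \<in> \<phi> ` {0..k+l}})"

definition rho_on :: "'a set \<Rightarrow> ('a \<times> 'a) set \<Rightarrow> 'a set \<Rightarrow> 'a \<Rightarrow> real" where
  "rho_on V E A v = real (card {a \<in> A. adj E a v}) / real (card V)"

definition rho :: "'a set \<Rightarrow> ('a \<times> 'a) set \<Rightarrow> 'a \<Rightarrow> real" where
  "rho V E v = rho_on V E V v"

definition Xset :: "'a set \<Rightarrow> ('a \<times> 'a) set \<Rightarrow> 'a set" where
  "Xset V E = {v \<in> V. rho V E v \<ge> 1/2}"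

definition Yset :: "'a set \<Rightarrow> ('a \<times> 'a) set \<Rightarrow> 'a set" where
  "Yset V E = V - Xset V E"

definition alpha :: "'a set \<Rightarrow> ('a \<times> 'a) set \<Rightarrow> real" where
  "alpha V E = real (card (Xset V E)) / real (card V)"

definition Dmin :: "'a set \<Rightarrow> ('a \<times> 'a) set \<Rightarrow> real" where
  "Dmin V E = Min (rho V E ` Xset V E)"

definition beta :: "'a set \<Rightarrow> ('a \<times> 'a) set \<Rightarrow> real" where
  "beta V E = Max (rho_on V E (Yset V E) ` Yset V E)"

end

theory Submission
  imports Defs
begin


lemma binom_term:
  fixes p q :: real
  assumes "p \<ge> 0" "q \<ge> 0"
  shows "real ((a+b) choose a) * p^a * q^b \<le> (p+q)^(a+b)"
proof -
  have "(p+q)^(a+b) = (\<Sum>i\<le>a+b. real ((a+b) choose i) * p^i * q^(a+b-i))"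
    by (simp add: binomial_ring)
  moreover have "real ((a+b) choose a) * p^a * q^b \<le> (\<Sum>i\<le>a+b. real ((a+b) choose i) * p^i * q^(a+b-i))"
    using member_le_sum[of a "{..a+b}" "\<lambda>i. real ((a+b) choose i) * p^i * q^(a+b-i)"] assms
    by simp
  ultimately show ?thesis by simp
qed

lemma choose_TT: "2 \<le> k \<Longrightarrow> k \<le> m \<Longrightarrow> k*(k-1)*(m choose k) = m*(m-1)*((m-2) choose (k-2))"
proof -
  assume h: "2 \<le> k" "k \<le> m"
  have 1: "k * (m choose k) = m * ((m-1) choose (k-1))" using h by (simp add: times_binomial_minus1_eq)
  have 2: "(k-1) * ((m-1) choose (k-1)) = (m-1) * ((m-1-1) choose (k-1-1))"
    using h by (intro times_binomial_minus1_eq) simp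
  have "k*(k-1)*(m choose k) = (k-1) * (k * (m choose k))" by simp
  also have "\<dots> = m * ((k-1) * ((m-1) choose (k-1)))" using 1 by (metis mult.left_commute)
  also have "\<dots> = m*(m-1)*((m-2) choose (k-2))" using 2 by (metis diff_diff_left one_add_one mult.assoc)
  finally show ?thesis .
qed

lemma choose_TF: "1 \<le> k \<Longrightarrow> 1 \<le> l \<Longrightarrow> k*l*((k+l) choose k) = (k+l)*(k+l-1)*((k+l-2) choose (k-1))"
proof -
  assume h: "1 \<le> k" "1 \<le> l"
  have 1: "k * ((k+l) choose k) = (k+l) * ((k+l-1) choose (k-1))" using h by (simp add: times_binomial_minus1_eq)
  have s1: "((k+l-1) choose (k-1)) = ((k+l-1) choose l)"
    using h binomial_symmetric[of "k-1" "k+l-1"] by simp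
  have 2: "l * ((k+l-1) choose l) = (k+l-1) * ((k+l-1-1) choose (l-1))"
    using h by (intro times_binomial_minus1_eq) simp
  have s2: "((k+l-2) choose (l-1)) = ((k+l-2) choose (k-1))"
    using h binomial_symmetric[of "l-1" "k+l-2"] by simp
  have "k*l*((k+l) choose k) = l * (k * ((k+l) choose k))" by simp
  also have "\<dots> = (k+l) * (l * ((k+l-1) choose l))" using 1 s1 by (metis mult.left_commute)
  also have "\<dots> = (k+l)*(k+l-1)*((k+l-2) choose (l-1))" using 2 by (metis diff_diff_left one_add_one mult.assoc)
  finally show ?thesis using s2 by simp
qed

lemma choose_FF: "2 \<le> l \<Longrightarrow> l*(l-1)*((k+l) choose k) = (k+l)*(k+l-1)*((k+l-2) choose k)"
proof -
  assume h: "2 \<le> l"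
  have a: "((k+l) choose k) = ((k+l) choose l)" using binomial_symmetric[of k "k+l"] by simp
  have b: "((k+l-2) choose k) = ((k+l-2) choose (l-2))" using h binomial_symmetric[of k "k+l-2"] by simp
  show ?thesis using choose_TT[of l "k+l"] h a b by simp
qed



lemma prod_const_split:
  assumes "finite T" "\<forall>t\<in>T-R. f t = c" "\<forall>t\<in>T\<inter>R. f t = 1"
  shows "prod f T = c ^ card (T-R)"
proof -
  have "prod f T = prod f (T\<inter>R) * prod f (T-R)"
    using assms(1) by (simp add: prod.Int_Diff)
  also have "prod f (T\<inter>R) = 1" using assms(3) by (intro prod.neutral) auto
  also have "prod f (T-R) = c ^ card (T-R)" using assms(2) by simp
  finally show ?thesis by simp
qed

lemma iso_nonzero:
  assumes "\<phi> \<in> star_isos V E k l" "i \<in> {0..k+l}" "j\<in>{0..k+l}" "\<not> adj E (\<phi> i) (\<phi> j)" "i \<noteq> j"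
  shows "i \<noteq> 0"
proof
  assume i0: "i = 0"
  then have j: "1 \<le> j" "j \<le> k+l" using assms by auto
  have "star_arc k l i j \<or> star_arc k l j i" using i0 j unfolding star_arc_def by auto
  then show False using assms j i0 unfolding star_isos_def adj_def by fastforce
qed



lemma star_arc_simps:
  "star_arc k l 0 t \<longleftrightarrow> 1 \<le> t \<and> t \<le> k"
  "star_arc k l t 0 \<longleftrightarrow> k+1 \<le> t \<and> t \<le> k+l"
  "a \<noteq> 0 \<Longrightarrow> b \<noteq> 0 \<Longrightarrow> \<not> star_arc k l a b"
  unfolding star_arc_def by auto

lemma dsum:
  fixes f :: "nat \<Rightarrow> nat \<Rightarrow> nat"
  assumes "\<forall>i\<in>A. \<forall>j\<in>B-{i}. f i j = K" "\<forall>i\<in>A. card (B-{i}) = N"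
  shows "(\<Sum>i\<in>A. \<Sum>j\<in>B-{i}. f i j) = card A * N * K"
proof -
  have "(\<Sum>i\<in>A. \<Sum>j\<in>B-{i}. f i j) = (\<Sum>i\<in>A. N * K)"
    using assms by (intro sum.cong) auto
  then show ?thesis by simp
qed

lemma case_bound:
  fixes o q S :: real
  assumes "Pn * Cmk = Mm * Cp" "0 < Cmk" "real Cp * X \<le> S"
  shows "real Pn * X \<le> real Mm / real Cmk * S"
proof -
  have "real Pn * real Cmk = real Mm * real Cp" using assms(1) by (metis of_nat_mult)
  then have "real Pn = real Mm / real Cmk * real Cp" using assms(2) by (simp add: field_simps)
  then have "real Pn * X = real Mm / real Cmk * (real Cp * X)" by simp
  also have "\<dots> \<le> real Mm / real Cmk * S" using assms(2,3) by (intro mult_left_mono) auto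
  finally show ?thesis .
qed

lemma Acs_sub:
  fixes V :: "'a set" and E and k l :: nat and x y c :: 'a
  assumes xy: "x \<noteq> y" "\<not> adj E x y"
  defines "m \<equiv> k+l"
  defines "P \<equiv> {v\<in>V. \<not> adj E v x} - {x,y}"
  defines "Ou \<equiv> {v\<in>P. (c,v)\<in>E \<and> (v,c)\<notin>E}"
  defines "In \<equiv> {v\<in>P. (v,c)\<in>E \<and> (c,v)\<notin>E}"
  defines "Tx \<equiv> (if (c,x)\<in>E then {1..k} else {k+1..m})"
  defines "Ty \<equiv> (if (c,y)\<in>E then {1..k} else {k+1..m})"
  defines "B \<equiv> (\<lambda>i j t. if t = 0 then {c} else if t = i then {x} else if t = j then {y} else if t \<le> k then Ou else In)"
  shows "{\<phi>\<in>star_isos V E k l. \<phi> 0 = c \<and> x \<in> \<phi>`{0..m} \<and> y \<in> \<phi>`{0..m}}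
     \<subseteq> (\<Union>i\<in>Tx. \<Union>j\<in>Ty-{i}. PiE {0..m} (B i j))"
proof
  fix \<phi> assume "\<phi> \<in> {\<phi>\<in>star_isos V E k l. \<phi> 0 = c \<and> x \<in> \<phi>`{0..m} \<and> y \<in> \<phi>`{0..m}}"
  then have iso: "\<phi> \<in> star_isos V E k l" and c0: "\<phi> 0 = c"
    and xim: "x \<in> \<phi>`{0..m}" and yim: "y \<in> \<phi>`{0..m}" by auto
  obtain i where i: "i \<in> {0..m}" "x = \<phi> i" using xim by auto
  obtain j where j: "j \<in> {0..m}" "y = \<phi> j" using yim by auto
  have maps: "\<phi> \<in> {0..m} \<rightarrow>\<^sub>E V" using iso unfolding star_isos_def star_maps_def m_def by auto
  have inj: "inj_on \<phi> {0..m}" using iso unfolding star_isos_def m_def by auto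
  have arc: "\<And>a b. a \<in> {0..m} \<Longrightarrow> b \<in> {0..m} \<Longrightarrow> (\<phi> a, \<phi> b) \<in> E \<longleftrightarrow> star_arc k l a b"
    using iso unfolding star_isos_def m_def by auto
  have ij: "i \<noteq> j" using xy i j by auto
  have i0: "i \<noteq> 0" using iso_nonzero[OF iso, of i j] i j xy ij unfolding m_def by auto
  have nadj': "\<not> adj E (\<phi> j) (\<phi> i)" using xy i j unfolding adj_def by auto
  have j0: "j \<noteq> 0" using iso_nonzero[OF iso, of j i] i j nadj' ij unfolding m_def by auto
  have iT: "i \<in> Tx"
  proof (cases "(c,x)\<in>E")
    case True
    then have "star_arc k l 0 i" using arc[of 0 i] c0 i by auto
    then show ?thesis using True unfolding Tx_def by (auto simp: star_arc_simps)
  next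
    case False
    then have "\<not> star_arc k l 0 i" using arc[of 0 i] c0 i by auto
    then show ?thesis using False i i0 unfolding Tx_def m_def by (auto simp: star_arc_simps)
  qed
  have jT: "j \<in> Ty - {i}"
  proof (cases "(c,y)\<in>E")
    case True
    then have "star_arc k l 0 j" using arc[of 0 j] c0 j by auto
    then show ?thesis using True ij unfolding Ty_def by (auto simp: star_arc_simps)
  next
    case False
    then have "\<not> star_arc k l 0 j" using arc[of 0 j] c0 j by auto
    then show ?thesis using False j j0 ij unfolding Ty_def m_def by (auto simp: star_arc_simps)
  qed
  have "\<phi> \<in> PiE {0..m} (B i j)"
  proof (rule PiE_I)
    fix t assume t: "t \<in> {0..m}"
    show "\<phi> t \<in> B i j t"
    proof (cases "t = 0 \<or> t = i \<or> t = j")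
      case True
      then show ?thesis using c0 i j unfolding B_def by auto
    next
      case False
      then have t0: "t \<noteq> 0" and ti: "t \<noteq> i" and tj: "t \<noteq> j" by auto
      have V: "\<phi> t \<in> V" using maps t by auto
      have nx: "\<phi> t \<noteq> x" using inj t i ti by (auto dest: inj_onD)
      have ny: "\<phi> t \<noteq> y" using inj t j tj by (auto dest: inj_onD)
      have na: "\<not> adj E (\<phi> t) x"
        using arc[of t i] arc[of i t] t i t0 i0 star_arc_simps(3) unfolding adj_def by metis
      have tP: "\<phi> t \<in> P" unfolding P_def using V nx ny na by auto
      show ?thesis
      proof (cases "t \<le> k")
        case True
        have "(c, \<phi> t) \<in> E" using arc[of 0 t] c0 t t0 True by (auto simp: star_arc_simps)
        moreover have "(\<phi> t, c) \<notin> E" using arc[of t 0] c0 t t0 True by (auto simp: star_arc_simps)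
        ultimately show ?thesis using tP True t0 ti tj unfolding B_def Ou_def by auto
      next
        case False
        have "(\<phi> t, c) \<in> E" using arc[of t 0] c0 t t0 False unfolding m_def by (auto simp: star_arc_simps)
        moreover have "(c, \<phi> t) \<notin> E" using arc[of 0 t] c0 t t0 False by (auto simp: star_arc_simps)
        ultimately show ?thesis using tP False t0 ti tj unfolding B_def In_def by auto
      qed
    qed
  next
    fix t assume "t \<notin> {0..m}"
    then show "\<phi> t = undefined" using maps by (auto simp: PiE_def extensional_def)
  qed
  then show "\<phi> \<in> (\<Union>i\<in>Tx. \<Union>j\<in>Ty-{i}. PiE {0..m} (B i j))" using iT jT by blast
qed



lemma card_PiB:
  fixes Ou In :: "'a set" and k l i j :: nat
  assumes "i \<noteq> j" "i \<noteq> 0" "j \<noteq> 0"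
  shows "card (PiE {0..k+l} (\<lambda>t. if t = 0 then {c} else if t = i then {x} else if t = j then {y} else if t \<le> k then Ou else In))
     = card Ou ^ card ({0..k}-{0,i,j}) * card In ^ card ({k+1..k+l}-{0,i,j})"
proof -
  define f where "f = (\<lambda>t. card (if t = 0 then {c} else if t = i then {x} else if t = j then {y} else if t \<le> k then Ou else In))"
  have split: "{0..k+l} = {0..k} \<union> {k+1..k+l}" by auto
  have "card (PiE {0..k+l} (\<lambda>t. if t = 0 then {c} else if t = i then {x} else if t = j then {y} else if t \<le> k then Ou else In))
     = prod f {0..k+l}" unfolding f_def by (simp add: card_PiE)
  also have "\<dots> = prod f {0..k} * prod f {k+1..k+l}"
    unfolding split by (rule prod.union_disjoint) auto
  also have "prod f {0..k} = card Ou ^ card ({0..k}-{0,i,j})"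
    by (rule prod_const_split) (auto simp: f_def)
  also have "prod f {k+1..k+l} = card In ^ card ({k+1..k+l}-{0,i,j})"
    by (rule prod_const_split) (auto simp: f_def)
  finally show ?thesis .
qed



lemma gen_bound:
  fixes p q S a b m k Pn :: nat
  assumes "Pn * (m choose k) = m*(m-1)*((m-2) choose a)" "a+b = m-2" "p+q \<le> S" "k \<le> m"
  shows "real (Pn * (p^a*q^b)) \<le> real(m*(m-1))/real(m choose k) * real S^(m-2)"
proof -
  have "real ((a+b) choose a) * real p ^ a * real q ^ b \<le> (real p + real q)^(a+b)"
    by (rule binom_term) auto
  also have "\<dots> \<le> real S ^ (a+b)" using assms(3) by (intro power_mono) auto
  finally have h: "real ((m-2) choose a) * (real p ^ a * real q ^ b) \<le> real S ^ (m-2)"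
    using assms(2) by (simp add: mult.assoc)
  have pos: "0 < m choose k" using assms(4) by simp
  have "real Pn * (real p ^ a * real q ^ b) \<le> real (m*(m-1)) / real (m choose k) * real S ^ (m-2)"
    by (rule case_bound[OF assms(1) pos h])
  then show ?thesis by simp
qed



lemma Acs_bound:
  fixes V :: "'a set" and E and k l :: nat and x y c :: 'a
  assumes finV: "finite V" and kl: "2 \<le> k" "1 \<le> l" and xy: "x \<noteq> y" "\<not> adj E x y"
  shows "real (card {\<phi>\<in>star_isos V E k l. \<phi> 0 = c \<and> x \<in> \<phi>`{0..k+l} \<and> y \<in> \<phi>`{0..k+l}})
     \<le> real((k+l)*(k+l-1)) / real((k+l) choose k) * real (card ({v\<in>V. \<not> adj E v x} - {x,y}))^(k+l-2)"
proof -
  define m where "m = k+l"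
  define P where "P = {v\<in>V. \<not> adj E v x} - {x,y}"
  define Ou where "Ou = {v\<in>P. (c,v)\<in>E \<and> (v,c)\<notin>E}"
  define In where "In = {v\<in>P. (v,c)\<in>E \<and> (c,v)\<notin>E}"
  define Tx where "Tx = (if (c,x)\<in>E then {1..k} else {k+1..m})"
  define Ty where "Ty = (if (c,y)\<in>E then {1..k} else {k+1..m})"
  define B where "B = (\<lambda>i j t. if t = 0 then {c} else if t = i then {x} else if t = j then {y} else if t \<le> k then Ou else In)"
  define A where "A = {\<phi>\<in>star_isos V E k l. \<phi> 0 = c \<and> x \<in> \<phi>`{0..m} \<and> y \<in> \<phi>`{0..m}}"
  define F where "F = (\<lambda>i j. card (PiE {0..m} (B i j)))"
  define R where "R = real(m*(m-1)) / real(m choose k)"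
  have sub: "A \<subseteq> (\<Union>i\<in>Tx. \<Union>j\<in>Ty-{i}. PiE {0..m} (B i j))"
    unfolding A_def Tx_def Ty_def B_def Ou_def In_def P_def m_def by (rule Acs_sub[OF xy])
  have finP: "finite P" using finV unfolding P_def by auto
  have finO: "finite Ou" "finite In" using finP unfolding Ou_def In_def by auto
  have finPi: "finite (PiE {0..m} (B i j))" for i j
    by (rule finite_PiE) (auto simp: B_def finO)
  have finT: "finite Tx" "finite Ty" unfolding Tx_def Ty_def by auto
  have "card A \<le> card (\<Union>i\<in>Tx. \<Union>j\<in>Ty-{i}. PiE {0..m} (B i j))"
    by (rule card_mono) (use sub finPi finT in auto)
  also have "\<dots> \<le> (\<Sum>i\<in>Tx. card (\<Union>j\<in>Ty-{i}. PiE {0..m} (B i j)))" by (rule card_UN_le[OF finT(1)])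
  also have "\<dots> \<le> (\<Sum>i\<in>Tx. \<Sum>j\<in>Ty-{i}. F i j)"
    unfolding F_def by (intro sum_mono card_UN_le) (use finT in auto)
  finally have tot: "card A \<le> (\<Sum>i\<in>Tx. \<Sum>j\<in>Ty-{i}. F i j)" .
  define p where "p = card Ou"
  define q where "q = card In"
  have Fform: "F i j = p ^ card ({0..k}-{0,i,j}) * q ^ card ({k+1..m}-{0,i,j})"
    if "i \<noteq> j" "i \<noteq> 0" "j \<noteq> 0" for i j
    unfolding F_def B_def m_def p_def q_def using card_PiB[OF that] by simp
  have pq: "p + q \<le> card P"
  proof -
    have "p + q = card (Ou \<union> In)" unfolding p_def q_def
      by (rule card_Un_disjoint[symmetric, OF finO]) (auto simp: Ou_def In_def)
    also have "\<dots> \<le> card P" by (rule card_mono[OF finP]) (auto simp: Ou_def In_def)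
    finally show ?thesis .
  qed
  have km: "k \<le> m" unfolding m_def by simp
  have RS0: "0 \<le> R * real (card P)^(m-2)" unfolding R_def by simp
  have main: "real (\<Sum>i\<in>Tx. \<Sum>j\<in>Ty-{i}. F i j) \<le> R * real (card P)^(m-2)"
  proof (cases "(c,x)\<in>E")
    case cx: True
    show ?thesis
    proof (cases "(c,y)\<in>E")
      case cy: True
      have "(\<Sum>i\<in>Tx. \<Sum>j\<in>Ty-{i}. F i j) = card Tx * (k-1) * (p^(k-2)*q^l)"
      proof (rule dsum)
        show "\<forall>i\<in>Tx. \<forall>j\<in>Ty-{i}. F i j = p^(k-2)*q^l"
        proof (intro ballI)
          fix i j assume i: "i \<in> Tx" and j: "j \<in> Ty-{i}"
          have i': "1 \<le> i" "i \<le> k" using i cx unfolding Tx_def by auto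
          have j': "1 \<le> j" "j \<le> k" "j \<noteq> i" using j cy unfolding Ty_def by auto
          have c1: "card ({0..k}-{0,i,j}) = k-2" using i' j' by (subst card_Diff_subset) auto
          have "{k+1..m}-{0,i,j} = {k+1..m}" using i' j' by auto
          then have c2: "card ({k+1..m}-{0,i,j}) = l" unfolding m_def by simp
          show "F i j = p^(k-2)*q^l" using Fform[of i j] i' j' c1 c2 by simp
        qed
        show "\<forall>i\<in>Tx. card (Ty-{i}) = k-1" using cx cy unfolding Tx_def Ty_def by auto
      qed
      also have "\<dots> = (k*(k-1)) * (p^(k-2)*q^l)" using cx unfolding Tx_def by simp
      finally have eq: "(\<Sum>i\<in>Tx. \<Sum>j\<in>Ty-{i}. F i j) = (k*(k-1)) * (p^(k-2)*q^l)" .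
      have "real ((k*(k-1)) * (p^(k-2)*q^l)) \<le> R * real (card P)^(m-2)"
        unfolding R_def
        by (rule gen_bound[OF _ _ pq km]) (use choose_TT[OF kl(1) km] kl in \<open>auto simp: m_def\<close>)
      then show ?thesis using eq by simp
    next
      case cy: False
      have "(\<Sum>i\<in>Tx. \<Sum>j\<in>Ty-{i}. F i j) = card Tx * l * (p^(k-1)*q^(l-1))"
      proof (rule dsum)
        show "\<forall>i\<in>Tx. \<forall>j\<in>Ty-{i}. F i j = p^(k-1)*q^(l-1)"
        proof (intro ballI)
          fix i j assume i: "i \<in> Tx" and j: "j \<in> Ty-{i}"
          have i': "1 \<le> i" "i \<le> k" using i cx unfolding Tx_def by auto
          have j': "k+1 \<le> j" "j \<le> m" using j cy unfolding Ty_def by auto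
          have "{0..k}-{0,i,j} = {0..k}-{0,i}" using j' by auto
          then have c1: "card ({0..k}-{0,i,j}) = k-1" using i' by (simp add: card_Diff_subset)
          have "{k+1..m}-{0,i,j} = {k+1..m}-{j}" using i' by auto
          then have c2: "card ({k+1..m}-{0,i,j}) = l-1" using j' unfolding m_def by simp
          show "F i j = p^(k-1)*q^(l-1)" using Fform[of i j] i' j' c1 c2 by simp
        qed
        show "\<forall>i\<in>Tx. card (Ty-{i}) = l" using cx cy unfolding Tx_def Ty_def m_def by auto
      qed
      also have "\<dots> = (k*l) * (p^(k-1)*q^(l-1))" using cx unfolding Tx_def by simp
      finally have eq: "(\<Sum>i\<in>Tx. \<Sum>j\<in>Ty-{i}. F i j) = (k*l) * (p^(k-1)*q^(l-1))" .
      have "real ((k*l) * (p^(k-1)*q^(l-1))) \<le> R * real (card P)^(m-2)"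
        unfolding R_def
        by (rule gen_bound[OF _ _ pq km]) (use choose_TF[of k l] kl in \<open>auto simp: m_def\<close>)
      then show ?thesis using eq by simp
    qed
  next
    case cx: False
    show ?thesis
    proof (cases "(c,y)\<in>E")
      case cy: True
      have "(\<Sum>i\<in>Tx. \<Sum>j\<in>Ty-{i}. F i j) = card Tx * k * (p^(k-1)*q^(l-1))"
      proof (rule dsum)
        show "\<forall>i\<in>Tx. \<forall>j\<in>Ty-{i}. F i j = p^(k-1)*q^(l-1)"
        proof (intro ballI)
          fix i j assume i: "i \<in> Tx" and j: "j \<in> Ty-{i}"
          have i': "k+1 \<le> i" "i \<le> m" using i cx unfolding Tx_def by auto
          have j': "1 \<le> j" "j \<le> k" using j cy unfolding Ty_def by auto
          have "{0..k}-{0,i,j} = {0..k}-{0,j}" using i' by auto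
          then have c1: "card ({0..k}-{0,i,j}) = k-1" using j' by (simp add: card_Diff_subset)
          have "{k+1..m}-{0,i,j} = {k+1..m}-{i}" using j' by auto
          then have c2: "card ({k+1..m}-{0,i,j}) = l-1" using i' unfolding m_def by simp
          show "F i j = p^(k-1)*q^(l-1)" using Fform[of i j] i' j' c1 c2 by simp
        qed
        show "\<forall>i\<in>Tx. card (Ty-{i}) = k" using cx cy unfolding Tx_def Ty_def m_def by auto
      qed
      also have "\<dots> = (k*l) * (p^(k-1)*q^(l-1))" using cx unfolding Tx_def m_def by simp
      finally have eq: "(\<Sum>i\<in>Tx. \<Sum>j\<in>Ty-{i}. F i j) = (k*l) * (p^(k-1)*q^(l-1))" .
      have "real ((k*l) * (p^(k-1)*q^(l-1))) \<le> R * real (card P)^(m-2)"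
        unfolding R_def
        by (rule gen_bound[OF _ _ pq km]) (use choose_TF[of k l] kl in \<open>auto simp: m_def\<close>)
      then show ?thesis using eq by simp
    next
      case cy: False
      have "(\<Sum>i\<in>Tx. \<Sum>j\<in>Ty-{i}. F i j) = card Tx * (l-1) * (p^k*q^(l-2))"
      proof (rule dsum)
        show "\<forall>i\<in>Tx. \<forall>j\<in>Ty-{i}. F i j = p^k*q^(l-2)"
        proof (intro ballI)
          fix i j assume i: "i \<in> Tx" and j: "j \<in> Ty-{i}"
          have i': "k+1 \<le> i" "i \<le> m" using i cx unfolding Tx_def by auto
          have j': "k+1 \<le> j" "j \<le> m" "j \<noteq> i" using j cy unfolding Ty_def by auto
          have "{0..k}-{0,i,j} = {0..k}-{0}" using i' j' by auto
          then have c1: "card ({0..k}-{0,i,j}) = k" by simp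
          have "{k+1..m}-{0,i,j} = {k+1..m}-{i,j}" by auto
          then have c2: "card ({k+1..m}-{0,i,j}) = l-2" using i' j' unfolding m_def
            by (simp add: card_Diff_subset)
          show "F i j = p^k*q^(l-2)" using Fform[of i j] i' j' c1 c2 kl by simp
        qed
        show "\<forall>i\<in>Tx. card (Ty-{i}) = l-1" using cx cy unfolding Tx_def Ty_def m_def by auto
      qed
      also have "\<dots> = (l*(l-1)) * (p^k*q^(l-2))" using cx unfolding Tx_def m_def by simp
      finally have eq: "(\<Sum>i\<in>Tx. \<Sum>j\<in>Ty-{i}. F i j) = (l*(l-1)) * (p^k*q^(l-2))" .
      show ?thesis
      proof (cases "2 \<le> l")
        case True
        have "real ((l*(l-1)) * (p^k*q^(l-2))) \<le> R * real (card P)^(m-2)"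
          unfolding R_def
          by (rule gen_bound[OF _ _ pq km]) (use choose_FF[OF True, of k] True in \<open>auto simp: m_def\<close>)
        then show ?thesis using eq by simp
      next
        case False
        then have "l = 1" using kl by simp
        then show ?thesis using eq RS0 by simp
      qed
    qed
  qed
  have "real (card A) \<le> R * real (card P)^(m-2)"
  proof -
    have "real (card A) \<le> real (\<Sum>i\<in>Tx. \<Sum>j\<in>Ty-{i}. F i j)" using tot by (simp only: of_nat_le_iff)
    then show ?thesis using main by linarith
  qed
  then show ?thesis unfolding A_def R_def P_def m_def .
qed



lemma denom_bound:
  fixes V :: "'a set" and k l :: nat
  assumes finV: "finite V" and xV: "x \<in> V" "y \<in> V" and xy: "x \<noteq> y"
  shows "(k+l+1)*(k+l) * (card V - 2)^(k+l-1)
     \<le> card {\<phi>\<in>star_maps V k l. x \<in> \<phi>`{0..k+l} \<and> y \<in> \<phi>`{0..k+l}}"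
proof -
  define m where "m = k+l"
  define Pairs where "Pairs = (SIGMA i:{0..m}. {0..m}-{i})"
  define D where "D = (\<lambda>(i,j). PiE {0..m} (\<lambda>t. if t=i then {x} else if t=j then {y} else V-{x,y}))"
  define M where "M = {\<phi>\<in>star_maps V k l. x \<in> \<phi>`{0..m} \<and> y \<in> \<phi>`{0..m}}"
  have finM: "finite M" unfolding M_def star_maps_def using finV by (intro finite_subset[OF _ finite_PiE[of "{0..k+l}" "\<lambda>_. V"]]) auto
  have sub: "(\<Union>p\<in>Pairs. D p) \<subseteq> M"
  proof
    fix \<phi> assume "\<phi> \<in> (\<Union>p\<in>Pairs. D p)"
    then obtain p where pP: "p \<in> Pairs" and phD: "\<phi> \<in> D p" by auto
    obtain i j where pij: "p = (i,j)" by (cases p)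
    have ij: "i \<in> {0..m}" "j \<in> {0..m}" "i \<noteq> j" using pP pij unfolding Pairs_def by auto
    have ph: "\<phi> \<in> PiE {0..m} (\<lambda>t. if t=i then {x} else if t=j then {y} else V-{x,y})"
      using phD pij unfolding D_def by simp
    have "\<phi> i = x" using PiE_mem[OF ph, of i] ij by simp
    moreover have "\<phi> j = y" using PiE_mem[OF ph, of j] ij by simp
    moreover have "\<phi> \<in> {0..m} \<rightarrow>\<^sub>E V"
      using ph xV by (auto simp: PiE_iff split: if_splits)
    ultimately show "\<phi> \<in> M" unfolding M_def star_maps_def using ij unfolding m_def
      by (auto intro!: image_eqI)
  qed
  have finPairs: "finite Pairs" unfolding Pairs_def by auto
  have finD: "\<forall>p\<in>Pairs. finite (D p)" unfolding D_def using finV by (auto intro!: finite_PiE)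
  have disj: "\<forall>p\<in>Pairs. \<forall>p'\<in>Pairs. p \<noteq> p' \<longrightarrow> D p \<inter> D p' = {}"
  proof (intro ballI impI)
    fix p p' assume p: "p \<in> Pairs" and p': "p' \<in> Pairs" and ne: "p \<noteq> p'"
    obtain i j where pij: "p = (i,j)" by (cases p)
    obtain i' j' where pij': "p' = (i',j')" by (cases p')
    have r: "i \<in> {0..m}" "j \<in> {0..m}" "i \<noteq> j" "i' \<in> {0..m}" "j' \<in> {0..m}" "i' \<noteq> j'"
      using p p' pij pij' unfolding Pairs_def by auto
    show "D p \<inter> D p' = {}"
    proof (rule ccontr)
      assume "D p \<inter> D p' \<noteq> {}"
      then obtain \<phi> where a: "\<phi> \<in> PiE {0..m} (\<lambda>t. if t=i then {x} else if t=j then {y} else V-{x,y})"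
        and b: "\<phi> \<in> PiE {0..m} (\<lambda>t. if t=i' then {x} else if t=j' then {y} else V-{x,y})"
        unfolding D_def pij pij' by auto
      have ai: "\<phi> i = x" using PiE_mem[OF a, of i] r by simp
      have aj: "\<phi> j = y" using PiE_mem[OF a, of j] r by simp
      have "i = i'"
      proof (rule ccontr)
        assume "i \<noteq> i'"
        then have "\<phi> i \<in> (if i=j' then {y} else V-{x,y})" using PiE_mem[OF b, of i] r by simp
        then show False using ai xy by (auto split: if_splits)
      qed
      moreover have "j = j'"
      proof (rule ccontr)
        assume "j \<noteq> j'"
        moreover have "j \<noteq> i'" using \<open>i = i'\<close> r by simp
        ultimately have "\<phi> j \<in> V-{x,y}" using PiE_mem[OF b, of j] r by simp
        then show False using aj by auto
      qed
      ultimately show False using ne pij pij' by simp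
    qed
  qed
  have cardD: "card (D p) = (card V - 2)^(m-1)" if "p \<in> Pairs" for p
  proof -
    obtain i j where pij: "p = (i,j)" by (cases p)
    have r: "i \<in> {0..m}" "j \<in> {0..m}" "i \<noteq> j" using that pij unfolding Pairs_def by auto
    have cV: "card (V-{x,y}) = card V - 2" using finV xV xy by (simp add: card_Diff_subset)
    have "card (D p) = (\<Prod>t\<in>{0..m}. card (if t=i then {x} else if t=j then {y} else V-{x,y}))"
      unfolding D_def pij by (simp add: card_PiE)
    also have "\<dots> = (card V - 2) ^ card ({0..m}-{i,j})"
      by (rule prod_const_split) (auto simp: cV)
    also have "card ({0..m}-{i,j}) = m-1" using r by (simp add: card_Diff_subset)
    finally show ?thesis .
  qed
  have cardP: "card Pairs = (m+1)*m" unfolding Pairs_def by simp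
  have "card (\<Union>p\<in>Pairs. D p) = (\<Sum>p\<in>Pairs. card (D p))"
    by (rule card_UN_disjoint[OF finPairs finD disj])
  also have "\<dots> = (\<Sum>p\<in>Pairs. (card V - 2)^(m-1))" using cardD by (intro sum.cong) auto
  also have "\<dots> = (m+1)*m*(card V - 2)^(m-1)" using cardP by simp
  finally have "(m+1)*m*(card V - 2)^(m-1) \<le> card M"
    using card_mono[OF finM sub] by simp
  then show ?thesis unfolding M_def m_def .
qed



lemma pow_aux:
  fixes n :: real and e :: nat
  assumes "n \<ge> 4" "e \<ge> 1"
  shows "n * (n-4)^e \<le> (n-2)^(e+1)"
proof -
  obtain d where e: "e = Suc d" using assms(2) by (cases e) auto
  have a: "n * (n-4) \<le> (n-2)^2" by (simp add: power2_eq_square algebra_simps)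
  have b: "(n-4)^d \<le> (n-2)^d" using assms(1) by (intro power_mono) auto
  have "n * (n-4)^e = (n*(n-4)) * (n-4)^d" unfolding e by (simp add: algebra_simps)
  also have "\<dots> \<le> (n-2)^2 * (n-2)^d"
    using a b assms(1) by (intro mult_mono) auto
  also have "\<dots> = (n-2)^(e+1)" unfolding e by (simp add: power_add[symmetric])
  finally show ?thesis .
qed

lemma final_ineq:
  fixes N M Cc S n a b D R mm :: real and e :: nat
  assumes N: "N \<le> Cc * (R * S^e)" "0 \<le> N"
    and M: "mm * (n-2)^(e+1) \<le> M" "0 < mm"
    and C: "0 \<le> Cc" "Cc \<le> a*n - 1 + b*n"
    and S: "0 \<le> S" "S \<le> (1-D)*n - 2"
    and D: "D \<ge> 1/2" and R: "R \<ge> 0" and n: "n \<ge> 0" and e: "e \<ge> 1"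
  shows "N / M \<le> R / mm * (a+b) * (1-D)^e"
proof -
  define u where "u = 1 - D"
  have u2: "u \<le> 1/2" using D unfolding u_def by simp
  have un: "u * n \<ge> 2" using S unfolding u_def by (simp add: algebra_simps)
  have upos: "u > 0"
  proof (rule ccontr)
    assume "\<not> u > 0"
    then have "u * n \<le> 0" using n by (simp add: mult_nonpos_nonneg)
    then show False using un by simp
  qed
  have n4: "n \<ge> 4"
  proof -
    have "2 \<le> u * n" by (rule un)
    also have "\<dots> \<le> 1/2 * n" using u2 n by (intro mult_right_mono) auto
    finally show ?thesis by simp
  qed
  have S2: "S \<le> u * (n-4)"
  proof -
    have "S \<le> u*n - 2" using S unfolding u_def by simp
    also have "\<dots> \<le> u*(n-4)" using u2 by (simp add: algebra_simps)
    finally show ?thesis .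
  qed
  have Se: "S^e \<le> u^e * (n-4)^e"
    using power_mono[OF S2 S(1), of e] by (simp add: power_mult_distrib)
  have ab: "Cc \<le> (a+b)*n" using C by (simp add: algebra_simps)
  have abpos: "0 \<le> (a+b)*n" using C ab by linarith
  have ab0: "0 \<le> a+b" using abpos n4 by (simp add: zero_le_mult_iff)
  have "N \<le> Cc * (R * S^e)" by (rule N(1))
  also have "\<dots> \<le> ((a+b)*n) * (R * (u^e * (n-4)^e))"
    using ab Se R C(1) S(1) abpos by (intro mult_mono mult_left_mono) auto
  also have "\<dots> = ((a+b) * R * u^e) * (n * (n-4)^e)" by (simp add: algebra_simps)
  also have "\<dots> \<le> ((a+b) * R * u^e) * (n-2)^(e+1)"
    using pow_aux[OF n4 e] ab0 R upos by (intro mult_left_mono) auto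
  finally have Nb: "N \<le> ((a+b) * R * u^e) * (n-2)^(e+1)" .
  have pp: "0 < (n-2)^(e+1)" using n4 by simp
  have Mpos: "0 < mm * (n-2)^(e+1)" using pp M(2) by simp
  have "N / M \<le> N / (mm * (n-2)^(e+1))"
    using N(2) Mpos M(1) by (intro divide_left_mono) auto
  also have "\<dots> \<le> (((a+b) * R * u^e) * (n-2)^(e+1)) / (mm * (n-2)^(e+1))"
    using Nb Mpos by (intro divide_right_mono) auto
  also have "\<dots> = ((a+b) * R * u^e) / mm"
    using pp by (intro nonzero_mult_divide_mult_cancel_right) auto
  also have "\<dots> = R / mm * (a+b) * u^e" by simp
  finally show ?thesis unfolding u_def .
qed



theorem claim4p5:
  fixes V :: "'a set" and E :: "('a \<times> 'a) set" and k l :: nat and x y :: 'a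
  assumes "digraph V E"
    and "k \<ge> l" and "l \<ge> 1" and "k + l \<ge> 6"
    and "x \<in> Xset V E" and "y \<in> Yset V E" and "\<not> adj E x y"
  shows "s_prob V E k l x y \<le>
    (real (k + l) - 1) / ((real (k + l) + 1) * real ((k + l) choose k))
      * (alpha V E + beta V E) * (1 - Dmin V E) ^ (k + l - 2)"
proof -
  have finV: "finite V" using assms(1) unfolding digraph_def by auto
  have noloop: "\<And>v. (v,v) \<notin> E" using assms(1) unfolding digraph_def by auto
  have xV: "x \<in> V" using assms(5) unfolding Xset_def by auto
  have yV: "y \<in> V" and ynX: "y \<notin> Xset V E" using assms(6) unfolding Yset_def by auto
  have xy: "x \<noteq> y" using assms(5) ynX by auto
  have nadj: "\<not> adj E x y" by (rule assms(7))
  have k2: "2 \<le> k" using assms(2-4) by linarith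
  have l1: "1 \<le> l" by (rule assms(3))
  define m where "m = k+l"
  define n where "n = card V"
  define C where "C = {c\<in>V. adj E c y}"
  define Acs where "Acs = (\<lambda>c. {\<phi>\<in>star_isos V E k l. \<phi> 0 = c \<and> x \<in> \<phi>`{0..k+l} \<and> y \<in> \<phi>`{0..k+l}})"
  define Nset where "Nset = {\<phi>\<in>star_isos V E k l. x \<in> \<phi>`{0..k+l} \<and> y \<in> \<phi>`{0..k+l}}"
  define Mset where "Mset = {\<phi>\<in>star_maps V k l. x \<in> \<phi>`{0..k+l} \<and> y \<in> \<phi>`{0..k+l}}"
  define P where "P = {v\<in>V. \<not> adj E v x} - {x,y}"
  define R where "R = real((k+l)*(k+l-1))/real((k+l) choose k)"
  have R0: "R \<ge> 0" unfolding R_def by simp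
  have AB: "real (card (Acs c)) \<le> R * real (card P)^(k+l-2)" for c
    using Acs_bound[OF finV k2 l1 xy nadj, of c] unfolding Acs_def R_def P_def by simp
  have finMaps: "finite (star_maps V k l)" unfolding star_maps_def using finV by (intro finite_PiE) auto
  have finN: "finite Nset" unfolding Nset_def star_isos_def
    by (rule finite_subset[OF _ finMaps]) auto
  have finC: "finite C" unfolding C_def using finV by auto
  have NsubU: "Nset \<subseteq> (\<Union>c\<in>C. Acs c)"
  proof
    fix \<phi> assume "\<phi> \<in> Nset"
    then have iso: "\<phi> \<in> star_isos V E k l" and xim: "x \<in> \<phi>`{0..k+l}" and yim: "y \<in> \<phi>`{0..k+l}"
      unfolding Nset_def by auto
    obtain i where i: "i \<in> {0..k+l}" "x = \<phi> i" using xim by auto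
    obtain j where j: "j \<in> {0..k+l}" "y = \<phi> j" using yim by auto
    have maps: "\<phi> \<in> {0..k+l} \<rightarrow>\<^sub>E V" using iso unfolding star_isos_def star_maps_def by auto
    have arc: "\<And>a b. a \<in> {0..k+l} \<Longrightarrow> b \<in> {0..k+l} \<Longrightarrow> (\<phi> a, \<phi> b) \<in> E \<longleftrightarrow> star_arc k l a b"
      using iso unfolding star_isos_def by auto
    have nadj': "\<not> adj E (\<phi> j) (\<phi> i)" using nadj i j unfolding adj_def by auto
    have j0: "j \<noteq> 0" using iso_nonzero[OF iso j(1) i(1) nadj'] xy i j by auto
    have "star_arc k l 0 j \<or> star_arc k l j 0" using j j0 unfolding star_arc_def by auto
    then have "adj E (\<phi> 0) y" using arc[of 0 j] arc[of j 0] j unfolding adj_def by auto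
    moreover have "\<phi> 0 \<in> V" using maps by auto
    ultimately have "\<phi> 0 \<in> C" unfolding C_def by auto
    moreover have "\<phi> \<in> Acs (\<phi> 0)" unfolding Acs_def using iso xim yim by auto
    ultimately show "\<phi> \<in> (\<Union>c\<in>C. Acs c)" by auto
  qed
  have "card Nset \<le> card (\<Union>c\<in>C. Acs c)"
    by (rule card_mono[OF _ NsubU]) (use finC finMaps in \<open>auto simp: Acs_def star_isos_def intro!: finite_subset[OF _ finMaps]\<close>)
  also have "\<dots> \<le> (\<Sum>c\<in>C. card (Acs c))" by (rule card_UN_le[OF finC])
  finally have "real (card Nset) \<le> real (\<Sum>c\<in>C. card (Acs c))" by (simp only: of_nat_le_iff)
  also have "\<dots> = (\<Sum>c\<in>C. real (card (Acs c)))" by simp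
  also have "\<dots> \<le> (\<Sum>c\<in>C. R * real (card P)^(k+l-2))" by (intro sum_mono AB)
  also have "\<dots> = real (card C) * (R * real (card P)^(k+l-2))" by simp
  finally have Nb: "real (card Nset) \<le> real (card C) * (R * real (card P)^(k+l-2))" .
  have n0: "n > 0" unfolding n_def using finV xV card_gt_0_iff by auto
  have finX: "finite (Xset V E)" unfolding Xset_def using finV by auto
  have finY: "finite (Yset V E)" unfolding Yset_def using finV by auto
  have Csub: "C \<subseteq> (Xset V E - {x}) \<union> {a\<in>Yset V E. adj E a y}"
    unfolding C_def Yset_def using nadj by auto
  have "card C \<le> card ((Xset V E - {x}) \<union> {a\<in>Yset V E. adj E a y})"
    by (rule card_mono[OF _ Csub]) (use finX finY in auto)
  also have "\<dots> \<le> card (Xset V E - {x}) + card {a\<in>Yset V E. adj E a y}" by (rule card_Un_le)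
  also have "card (Xset V E - {x}) = card (Xset V E) - 1" using assms(5) finX by simp
  finally have Cn: "card C \<le> card (Xset V E) - 1 + card {a\<in>Yset V E. adj E a y}" .
  have Xne0: "Xset V E \<noteq> {}" using assms(5) by blast
  have "card (Xset V E) > 0" using finX Xne0 by (simp add: card_gt_0_iff)
  then have Xpos: "card (Xset V E) \<ge> 1" by simp
  have alpha_n: "alpha V E * real n = real (card (Xset V E))"
    unfolding alpha_def n_def using n0 unfolding n_def by simp
  have beta_ge: "rho_on V E (Yset V E) y \<le> beta V E"
    unfolding beta_def using finY assms(6) by (intro Max_ge) auto
  have beta_n: "real (card {a\<in>Yset V E. adj E a y}) \<le> beta V E * real n"
  proof -
    have "real (card {a\<in>Yset V E. adj E a y}) = rho_on V E (Yset V E) y * real n"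
      unfolding rho_on_def n_def using n0 unfolding n_def by simp
    also have "\<dots> \<le> beta V E * real n" using beta_ge by (intro mult_right_mono) auto
    finally show ?thesis .
  qed
  have Cb: "real (card C) \<le> alpha V E * real n - 1 + beta V E * real n"
  proof -
    have "real (card C) \<le> real (card (Xset V E) - 1 + card {a\<in>Yset V E. adj E a y})"
      using Cn by (simp only: of_nat_le_iff)
    also have "\<dots> = real (card (Xset V E)) - 1 + real (card {a\<in>Yset V E. adj E a y})"
      using Xpos by (simp add: of_nat_diff)
    finally show ?thesis using alpha_n beta_n by linarith
  qed
  have Xne: "Xset V E \<noteq> {}" using assms(5) by auto
  have Dge: "Dmin V E \<ge> 1/2"
  proof -
    have "Dmin V E \<in> rho V E ` Xset V E" unfolding Dmin_def using finX Xne by (intro Min_in) auto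
    then show ?thesis unfolding Xset_def by auto
  qed
  have Dle: "Dmin V E \<le> rho V E x" unfolding Dmin_def using finX assms(5) by (intro Min_le) auto
  define deg where "deg = card {a\<in>V. adj E a x}"
  have rho_x: "rho V E x * real n = real deg"
    unfolding rho_def rho_on_def deg_def n_def using n0 unfolding n_def by simp
  have nonN: "{v\<in>V. \<not> adj E v x} = V - {a\<in>V. adj E a x}" by auto
  have c1: "card {v\<in>V. \<not> adj E v x} = n - deg"
    unfolding nonN n_def deg_def using finV by (intro card_Diff_subset) auto
  have xyin: "{x,y} \<subseteq> {v\<in>V. \<not> adj E v x}" using xV yV nadj noloop unfolding adj_def by auto
  have finNN: "finite {v\<in>V. \<not> adj E v x}" using finV by auto
  have cP: "card P = card {v\<in>V. \<not> adj E v x} - 2"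
    unfolding P_def using card_Diff_subset[OF _ xyin] finNN xy by simp
  have degle: "deg + 2 \<le> n"
  proof -
    have "card {x,y} \<le> card {v\<in>V. \<not> adj E v x}" by (rule card_mono[OF finNN xyin])
    then show ?thesis using c1 xy by simp
  qed
  have Sreal: "real (card P) = real n - real deg - 2" using cP c1 degle by (simp add: of_nat_diff)
  have Sb: "real (card P) \<le> (1 - Dmin V E) * real n - 2"
  proof -
    have "real deg \<ge> Dmin V E * real n" using Dle rho_x n0 by (metis mult_right_mono of_nat_0_le_iff)
    then show ?thesis using Sreal by (simp add: algebra_simps)
  qed
  have n2: "n \<ge> 2" using degle by simp
  have db: "(k+l+1)*(k+l) * (n - 2)^(k+l-1) \<le> card Mset"
    using denom_bound[OF finV xV yV xy, of k l] unfolding Mset_def n_def by simp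
  have Mb: "real ((k+l+1)*(k+l)) * (real n - 2)^((k+l-2)+1) \<le> real (card Mset)"
  proof -
    have e: "(k+l-2)+1 = k+l-1" using k2 by simp
    have "real ((k+l+1)*(k+l) * (n - 2)^(k+l-1)) \<le> real (card Mset)" using db by (simp only: of_nat_le_iff)
    then show ?thesis unfolding e using n2 by (simp add: of_nat_diff)
  qed
  have mm: "0 < real((k+l+1)*(k+l))" using k2 by (simp only: of_nat_0_less_iff) simp
  have e1: "1 \<le> k+l-2" using assms(4) by simp
  have fin: "real (card Nset) / real (card Mset) \<le> R / real ((k+l+1)*(k+l)) * (alpha V E + beta V E) * (1 - Dmin V E)^(k+l-2)"
    by (rule final_ineq[OF Nb _ Mb mm _ Cb _ Sb Dge R0 _ e1]) auto
  have sp: "s_prob V E k l x y = real (card Nset) / real (card Mset)"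
    unfolding s_prob_def Nset_def Mset_def by simp
  have Req: "R / real ((k+l+1)*(k+l)) = (real (k + l) - 1) / ((real (k + l) + 1) * real ((k + l) choose k))"
  proof -
    define M where "M = real (k+l)"
    define Cc where "Cc = real ((k+l) choose k)"
    have Mp: "M > 0" unfolding M_def using k2 by simp
    have "real (k+l-1) = real (k+l) - 1" using k2 by (simp add: of_nat_diff)
    then have R': "R = M * (M-1) / Cc" unfolding R_def M_def Cc_def by (simp only: of_nat_mult)
    have mm': "real ((k+l+1)*(k+l)) = (M+1)*M" unfolding M_def by (simp add: algebra_simps)
    have "M * (M-1) / Cc / ((M+1)*M) = (M-1) / ((M+1)*Cc)" using Mp by (simp add: divide_divide_eq_left)
    then show ?thesis unfolding R' mm' M_def Cc_def .
  qed
  show ?thesis unfolding sp using fin unfolding Req .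
qed


end
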